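(* (1-cut in MRL.) For every sequent $\Gamma$ and every formula $A$ of MRL: if $\Gamma, \emptyset{:}A$ is derivable in MRL, then $\Gamma$ is derivable in MRL.
   Context: Fix a nonempty set $\mathcal{R}$ (the set of roles). For $R\subseteq\mathcal{R}$ write $\overline{R}=\mathcal{R}\setminus R$. An ultrafilter $\mathcal{U}$ on $\mathcal{R}$ is a set of subsets of $\mathcal{R}$ such that $\mathcal{R}\in\mathcal{U}$; $R_1\in\mathcal{U}$ and $R_1\subseteq R_2$ imply $R_2\in\mathcal{U}$; $R_1,R_2\in\mathcal{U}$ imply $R_1\cap R_2\in\mathcal{U}$; and for every $R\subseteq\mathcal{R}$, $R\in\mathcal{U}$ or $\overline{R}\in\mathcal{U}$. An endomorphism is any function $f:\mathcal{R}\to\mathcal{R}$, and $f^{-1}(R)$ denotes the preimage of $R$. Fix a first-order language of terms $t$ with variables $x$, and a collection of primitive (atomic) formulas $a$ (which may contain terms). Formulas of MRL: $A ::= a \mid \neg_f(A) \mid A_1\wedge_{\mathcal{U}} A_2 \mid A\supset_{f,\mathcal{U}} B \mid \forall_{\mathcal{U}}(\lambda x.A)$, with $f$ an endomorphism and $\mathcal{U}$ an ultrafilter on $\mathcal{R}$; $x$ is bound in $\forall_{\mathcal{U}}(\lambda x.A)$, and $A[t/x]$ is capture-avoiding substitution. An i-formula is a pair $R{:}A$ with $R\subseteq\mathcal{R}$ and $A$ a formula; a sequent is a finite multiset of i-formulas, and comma denotes multiset union. Derivability in MRL is given by the rules (premises $\Rightarrow$ conclusion, $\Gamma,\Gamma_1,\Gamma_2$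 arbitrary sequents): (Id) $\Gamma, R_1{:}a,\ldots,R_n{:}a$ is derivable whenever $n\ge1$ and $R_1,\ldots,R_n$ are pairwise disjoint with union $\mathcal{R}$; (Weaken) $\Gamma,R{:}A,R{:}A \Rightarrow \Gamma,R{:}A$; ($\neg$) $\Gamma, f^{-1}(R){:}A \Rightarrow \Gamma, R{:}\neg_f(A)$; ($\wedge$-neg-l) if $R\notin\mathcal{U}$: $\Gamma,R{:}A\Rightarrow\Gamma,R{:}A\wedge_{\mathcal{U}}B$; ($\wedge$-neg-r) if $R\notin\mathcal{U}$: $\Gamma,R{:}B\Rightarrow\Gamma,R{:}A\wedge_{\mathcal{U}}B$; ($\wedge$-pos) if $R\in\mathcal{U}$: $(\Gamma,R{:}A;\ \Gamma,R{:}B)\Rightarrow\Gamma,R{:}A\wedge_{\mathcal{U}}B$; ($\supset$-neg) if $R\notin\mathcal{U}$: $\Gamma,f^{-1}(R){:}A,R{:}B\Rightarrow\Gamma,R{:}A\supset_{f,\mathcal{U}}B$; ($\supset$-pos) if $R\in\mathcal{U}$: $(\Gamma_1,f^{-1}(R){:}A;\ \Gamma_2,R{:}B)\Rightarrow\Gamma_1,\Gamma_2,R{:}A\supset_{f,\mathcal{U}}B$; ($\forall$-neg) if $R\notin\mathcal{U}$ and $t$ is a term: $\Gamma,R{:}A[t/x]\Rightarrow\Gamma,R{:}\forall_{\mathcal{U}}(\lambda x.A)$; ($\forall$-pos) if $R\in\mathcal{U}$ and $x$ has no free occurrence in $\Gamma$: $\Gamma,R{:}A\Rightarrow\Gamma,R{:}\forall_{\mathcal{U}}(\lambda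 x.A)$. A sequent is derivable in MRL if it is the conclusion of a finite derivation tree built from these rules. *)

theory Defs
  imports Main "HOL-Library.Multiset"
begin

(* Ultrafilters on the set of roles, exactly as in the paper (roles = UNIV :: 'r set). *)
definition is_ultrafilter :: "'r set set \<Rightarrow> bool" where
  "is_ultrafilter U \<longleftrightarrow>
     UNIV \<in> U
   \<and> (\<forall>R1 R2. R1 \<in> U \<and> R1 \<subseteq> R2 \<longrightarrow> R2 \<in> U)
   \<and> (\<forall>R1 R2. R1 \<in> U \<and> R2 \<in> U \<longrightarrow> R1 \<inter> R2 \<in> U)
   \<and> (\<forall>R. R \<in> U \<or> - R \<in> U)"

typedef 'r ufilter = "{U :: 'r set set. is_ultrafilter U}"
  by (rule exI[of _ UNIV]) (auto simp: is_ultrafilter_def)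

definition inU :: "'r set \<Rightarrow> 'r ufilter \<Rightarrow> bool" where
  "inU R U \<longleftrightarrow> R \<in> Rep_ufilter U"

(* First-order terms; variables are de Bruijn indices. *)
datatype 'f trm = Var nat | Fn 'f "'f trm list"

(* MRL formulas; Forall binds de Bruijn index 0 in its body. *)
datatype ('r, 'f, 'p) form =
    Atom 'p "'f trm list"
  | Neg "'r \<Rightarrow> 'r" "('r, 'f, 'p) form"
  | Conj "'r ufilter" "('r, 'f, 'p) form" "('r, 'f, 'p) form"
  | Imp "'r \<Rightarrow> 'r" "'r ufilter" "('r, 'f, 'p) form" "('r, 'f, 'p) form"
  | Forall "'r ufilter" "('r, 'f, 'p) form"

primrec lift_trm :: "nat \<Rightarrow> 'f trm \<Rightarrow> 'f trm" where
  "lift_trm k (Var i) = (if i < k then Var i else Var (Suc i))"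
| "lift_trm k (Fn f ts) = Fn f (map (lift_trm k) ts)"

primrec subst_trm :: "nat \<Rightarrow> 'f trm \<Rightarrow> 'f trm \<Rightarrow> 'f trm" where
  "subst_trm k t (Var i) = (if i < k then Var i else if i = k then t else Var (i - 1))"
| "subst_trm k t (Fn f ts) = Fn f (map (subst_trm k t) ts)"

primrec lift_form :: "nat \<Rightarrow> ('r, 'f, 'p) form \<Rightarrow> ('r, 'f, 'p) form" where
  "lift_form k (Atom p ts) = Atom p (map (lift_trm k) ts)"
| "lift_form k (Neg f A) = Neg f (lift_form k A)"
| "lift_form k (Conj U A B) = Conj U (lift_form k A) (lift_form k B)"
| "lift_form k (Imp f U A B) = Imp f U (lift_form k A) (lift_form k B)"
| "lift_form k (Forall U A) = Forall U (lift_form (Suc k) A)"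

primrec subst_form :: "nat \<Rightarrow> 'f trm \<Rightarrow> ('r, 'f, 'p) form \<Rightarrow> ('r, 'f, 'p) form" where
  "subst_form k t (Atom p ts) = Atom p (map (subst_trm k t) ts)"
| "subst_form k t (Neg f A) = Neg f (subst_form k t A)"
| "subst_form k t (Conj U A B) = Conj U (subst_form k t A) (subst_form k t B)"
| "subst_form k t (Imp f U A B) = Imp f U (subst_form k t A) (subst_form k t B)"
| "subst_form k t (Forall U A) = Forall U (subst_form (Suc k) (lift_trm 0 t) A)"

(* i-formulas R:A and sequents (finite multisets of i-formulas) *)
type_synonym ('r, 'f, 'p) iform = "'r set \<times> ('r, 'f, 'p) form"
type_synonym ('r, 'f, 'p) sequent = "('r, 'f, 'p) iform multiset"

definition lift_seq :: "('r, 'f, 'p) sequent \<Rightarrow> ('r, 'f, 'p) sequent" where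
  "lift_seq \<Gamma> = image_mset (\<lambda>(R, B). (R, lift_form 0 B)) \<Gamma>"

inductive mrl :: "('r, 'f, 'p) sequent \<Rightarrow> bool" where
  Id: "Rs \<noteq> [] \<Longrightarrow>
       (\<forall>i j. i < length Rs \<and> j < length Rs \<and> i \<noteq> j \<longrightarrow> Rs ! i \<inter> Rs ! j = {}) \<Longrightarrow>
       \<Union> (set Rs) = UNIV \<Longrightarrow>
       mrl (\<Gamma> + mset (map (\<lambda>R. (R, Atom p ts)) Rs))"
| Weaken: "mrl (\<Gamma> + {#(R, A), (R, A)#}) \<Longrightarrow> mrl (\<Gamma> + {#(R, A)#})"
| NegR: "mrl (add_mset (f -` R, A) \<Gamma>) \<Longrightarrow> mrl (add_mset (R, Neg f A) \<Gamma>)"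
| ConjNegL: "\<not> inU R U \<Longrightarrow> mrl (add_mset (R, A) \<Gamma>) \<Longrightarrow> mrl (add_mset (R, Conj U A B) \<Gamma>)"
| ConjNegR: "\<not> inU R U \<Longrightarrow> mrl (add_mset (R, B) \<Gamma>) \<Longrightarrow> mrl (add_mset (R, Conj U A B) \<Gamma>)"
| ConjPos: "inU R U \<Longrightarrow> mrl (add_mset (R, A) \<Gamma>) \<Longrightarrow> mrl (add_mset (R, B) \<Gamma>) \<Longrightarrow>
            mrl (add_mset (R, Conj U A B) \<Gamma>)"
| ImpNeg: "\<not> inU R U \<Longrightarrow> mrl (\<Gamma> + {#(f -` R, A), (R, B)#}) \<Longrightarrow>
           mrl (add_mset (R, Imp f U A B) \<Gamma>)"
| ImpPos: "inU R U \<Longrightarrow> mrl (add_mset (f -` R, A) \<Gamma>1) \<Longrightarrow> mrl (add_mset (R, B) \<Gamma>2) \<Longrightarrow>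
           mrl (add_mset (R, Imp f U A B) (\<Gamma>1 + \<Gamma>2))"
| AllNeg: "\<not> inU R U \<Longrightarrow> mrl (add_mset (R, subst_form 0 t A) \<Gamma>) \<Longrightarrow>
           mrl (add_mset (R, Forall U A) \<Gamma>)"
| AllPos: "inU R U \<Longrightarrow> mrl (add_mset (R, A) (lift_seq \<Gamma>)) \<Longrightarrow>
           mrl (add_mset (R, Forall U A) \<Gamma>)"

end

theory Submission
  imports Defs
begin

lemma mrl_weak: "mrl \<Gamma> \<Longrightarrow> mrl (\<Gamma> + \<Delta>)"
proof (induction arbitrary: \<Delta> rule: mrl.induct)
  case (Id Rs \<Gamma> p ts)
  have "mrl ((\<Gamma> + \<Delta>) + mset (map (\<lambda>R. (R, Atom p ts)) Rs))"
    using Id(1,2,3) by (rule mrl.Id)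
  then show ?case by (simp add: ac_simps)
next
  case (Weaken \<Gamma> R A)
  have "mrl ((\<Gamma> + \<Delta>) + {#(R, A), (R, A)#})"
    using Weaken.IH[of \<Delta>] by simp
  from mrl.Weaken[OF this] show ?case by simp
next
  case (NegR f R A \<Gamma>)
  then show ?case using mrl.NegR by (metis union_mset_add_mset_left)
next
  case (ConjNegL R U A \<Gamma> B)
  then show ?case using mrl.ConjNegL by (metis union_mset_add_mset_left)
next
  case (ConjNegR R U B \<Gamma> A)
  then show ?case using mrl.ConjNegR by (metis union_mset_add_mset_left)
next
  case (ConjPos R U A \<Gamma> B)
  then show ?case using mrl.ConjPos by (metis union_mset_add_mset_left)
next
  case (ImpNeg R U \<Gamma> f A B)
  have "mrl ((\<Gamma> + \<Delta>) + {#(f -` R, A), (R, B)#})"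
    using ImpNeg.IH[of \<Delta>] by simp
  then show ?case using mrl.ImpNeg[OF ImpNeg(1)] by (metis union_mset_add_mset_left)
next
  case (ImpPos R U f A \<Gamma>1 B \<Gamma>2)
  have "mrl (add_mset (R, Imp f U A B) ((\<Gamma>1 + \<Delta>) + \<Gamma>2))"
  proof -
    have "mrl (add_mset (f -` R, A) (\<Gamma>1 + \<Delta>))" using ImpPos.IH(1)[of \<Delta>] by simp
    from mrl.ImpPos[OF ImpPos(1) this ImpPos(3)] show ?thesis .
  qed
  then show ?case by (simp add: ac_simps)
next
  case (AllNeg R U t A \<Gamma>)
  then show ?case using mrl.AllNeg by (metis union_mset_add_mset_left)
next
  case (AllPos R U A \<Gamma>)
  have "lift_seq (\<Gamma> + \<Delta>) = lift_seq \<Gamma> + lift_seq \<Delta>"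
    by (simp add: lift_seq_def)
  then have "mrl (add_mset (R, A) (lift_seq (\<Gamma> + \<Delta>)))"
    using AllPos.IH[of "lift_seq \<Delta>"] by simp
  then show ?case using mrl.AllPos[OF AllPos(1)] by simp
qed

primrec sub_t :: "(nat \<Rightarrow> 'f trm) \<Rightarrow> 'f trm \<Rightarrow> 'f trm" where
  "sub_t \<sigma> (Var i) = \<sigma> i"
| "sub_t \<sigma> (Fn f ts) = Fn f (map (sub_t \<sigma>) ts)"

definition up :: "(nat \<Rightarrow> 'f trm) \<Rightarrow> nat \<Rightarrow> 'f trm" where
  "up \<sigma> i = (case i of 0 \<Rightarrow> Var 0 | Suc j \<Rightarrow> lift_trm 0 (\<sigma> j))"

primrec sub_f :: "(nat \<Rightarrow> 'f trm) \<Rightarrow> ('r, 'f, 'p) form \<Rightarrow> ('r, 'f, 'p) form" where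
  "sub_f \<sigma> (Atom p ts) = Atom p (map (sub_t \<sigma>) ts)"
| "sub_f \<sigma> (Neg f A) = Neg f (sub_f \<sigma> A)"
| "sub_f \<sigma> (Conj U A B) = Conj U (sub_f \<sigma> A) (sub_f \<sigma> B)"
| "sub_f \<sigma> (Imp f U A B) = Imp f U (sub_f \<sigma> A) (sub_f \<sigma> B)"
| "sub_f \<sigma> (Forall U A) = Forall U (sub_f (up \<sigma>) A)"

definition lk :: "nat \<Rightarrow> nat \<Rightarrow> 'f trm" where
  "lk k i = (if i < k then Var i else Var (Suc i))"

definition sk :: "nat \<Rightarrow> 'f trm \<Rightarrow> nat \<Rightarrow> 'f trm" where
  "sk k t i = (if i < k then Var i else if i = k then t else Var (i - 1))"

lemma L1: "sub_t \<sigma> (sub_t \<tau> s) = sub_t (\<lambda>i. sub_t \<sigma> (\<tau> i)) s"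
  by (induction s) auto

lemma L2: "lift_trm k s = sub_t (lk k) s"
  by (induction s) (auto simp: lk_def)

lemma L3: "sub_t Var s = s"
  by (induction s) (auto simp: map_idI)

lemma L4: "subst_trm k t s = sub_t (sk k t) s"
  by (induction s) (auto simp: sk_def)

lemma F0: "up (lk k) = lk (Suc k)"
  by (rule ext) (auto simp: up_def lk_def split: nat.splits)

lemma F1: "lift_form k B = sub_f (lk k) B"
  by (induction B arbitrary: k) (auto simp: L2 F0)

lemma F2: "up (sk k t) = sk (Suc k) (lift_trm 0 t)"
  by (rule ext) (auto simp: up_def sk_def split: nat.splits)

lemma F3: "subst_form k t B = sub_f (sk k t) B"
  by (induction B arbitrary: k t) (auto simp: L4 F2)

lemma Fup: "(\<lambda>i. sub_t (up \<sigma>) (up \<tau> i)) = up (\<lambda>i. sub_t \<sigma> (\<tau> i))"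
proof (rule ext)
  fix i show "sub_t (up \<sigma>) (up \<tau> i) = up (\<lambda>i. sub_t \<sigma> (\<tau> i)) i"
  proof (cases i)
    case 0 then show ?thesis by (simp add: up_def)
  next
    case (Suc j)
    have "sub_t (up \<sigma>) (lift_trm 0 (\<tau> j)) = sub_t (\<lambda>i. lift_trm 0 (\<sigma> i)) (\<tau> j)"
      unfolding L2[of 0 "\<tau> j"] L1 by (simp add: lk_def up_def)
    moreover have "lift_trm 0 (sub_t \<sigma> (\<tau> j)) = sub_t (\<lambda>i. lift_trm 0 (\<sigma> i)) (\<tau> j)"
      unfolding L2[of 0] L1 ..
    ultimately show ?thesis using Suc by (simp add: up_def)
  qed
qed

lemma Fcomp: "sub_f \<sigma> (sub_f \<tau> B) = sub_f (\<lambda>i. sub_t \<sigma> (\<tau> i)) B"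
  by (induction B arbitrary: \<sigma> \<tau>) (auto simp: L1 Fup)

lemma upVar: "up Var = Var"
  by (rule ext) (auto simp: up_def split: nat.splits)

lemma Fid: "sub_f Var B = B"
  by (induction B) (auto simp: L3 upVar map_idI)

lemma E1: "sub_f (up \<sigma>) (lift_form 0 B) = lift_form 0 (sub_f \<sigma> B)"
proof -
  have "(\<lambda>i. sub_t (up \<sigma>) (lk 0 i)) = (\<lambda>i. sub_t (lk 0) (\<sigma> i))"
    by (rule ext) (simp add: lk_def up_def L2[symmetric])
  then show ?thesis by (simp add: F1[of 0] Fcomp)
qed

lemma E2: "subst_form 0 (sub_t \<sigma> t) (sub_f (up \<sigma>) A) = sub_f \<sigma> (subst_form 0 t A)"
proof -
  have "(\<lambda>i. sub_t (sk 0 (sub_t \<sigma> t)) (up \<sigma> i)) = (\<lambda>i. sub_t \<sigma> (sk 0 t i))"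
  proof (rule ext)
    fix i show "sub_t (sk 0 (sub_t \<sigma> t)) (up \<sigma> i) = sub_t \<sigma> (sk 0 t i)"
    proof (cases i)
      case 0 then show ?thesis by (simp add: up_def sk_def)
    next
      case (Suc j)
      have "sub_t (sk 0 (sub_t \<sigma> t)) (lift_trm 0 (\<sigma> j)) = sub_t Var (\<sigma> j)"
        unfolding L2[of 0] L1 by (simp add: lk_def sk_def)
      then show ?thesis using Suc by (simp add: up_def sk_def L3)
    qed
  qed
  then show ?thesis by (simp add: F3[of 0] Fcomp)
qed

lemma E3: "sub_f (sk 0 (Var 0)) (lift_form 0 B) = B"
proof -
  have "(\<lambda>i. sub_t (sk 0 (Var 0)) (lk 0 i)) = (Var :: nat \<Rightarrow> 'f trm)"
    by (rule ext) (simp add: lk_def sk_def)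
  then show ?thesis unfolding F1[of 0] Fcomp by (metis Fid)
qed

definition sub_seq :: "(nat \<Rightarrow> 'f trm) \<Rightarrow> ('r, 'f, 'p) sequent \<Rightarrow> ('r, 'f, 'p) sequent" where
  "sub_seq \<sigma> \<Gamma> = image_mset (\<lambda>(R, B). (R, sub_f \<sigma> B)) \<Gamma>"

lemma sub_lift: "sub_seq (up \<sigma>) (lift_seq \<Gamma>) = lift_seq (sub_seq \<sigma> \<Gamma>)"
  by (induction \<Gamma>) (auto simp: sub_seq_def lift_seq_def E1)

lemma sub_unlift: "sub_seq (sk 0 (Var 0)) (lift_seq \<Gamma>) = \<Gamma>"
  by (induction \<Gamma>) (auto simp: sub_seq_def lift_seq_def E3)

lemma mrl_sub: "mrl \<Gamma> \<Longrightarrow> mrl (sub_seq \<sigma> \<Gamma>)"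
proof (induction arbitrary: \<sigma> rule: mrl.induct)
  case (Id Rs \<Gamma> p ts)
  have "mrl (sub_seq \<sigma> \<Gamma> + mset (map (\<lambda>R. (R, Atom p (map (sub_t \<sigma>) ts))) Rs))"
    using Id(1,2,3) by (rule mrl.Id)
  moreover have "sub_seq \<sigma> (\<Gamma> + mset (map (\<lambda>R. (R, Atom p ts)) Rs)) = sub_seq \<sigma> \<Gamma> + mset (map (\<lambda>R. (R, Atom p (map (sub_t \<sigma>) ts))) Rs)"
    by (induction Rs) (auto simp: sub_seq_def)
  ultimately show ?case by simp
next
  case (Weaken \<Gamma> R A)
  have "mrl (sub_seq \<sigma> \<Gamma> + {#(R, sub_f \<sigma> A), (R, sub_f \<sigma> A)#})"
    using Weaken.IH[of \<sigma>] by (simp add: sub_seq_def)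
  from mrl.Weaken[OF this] show ?case by (simp add: sub_seq_def)
next
  case (NegR f R A \<Gamma>)
  have "mrl (add_mset (f -` R, sub_f \<sigma> A) (sub_seq \<sigma> \<Gamma>))"
    using NegR.IH[of \<sigma>] by (simp add: sub_seq_def)
  from mrl.NegR[OF this] show ?case by (simp add: sub_seq_def)
next
  case (ConjNegL R U A \<Gamma> B)
  have "mrl (add_mset (R, sub_f \<sigma> A) (sub_seq \<sigma> \<Gamma>))"
    using ConjNegL.IH[of \<sigma>] by (simp add: sub_seq_def)
  from mrl.ConjNegL[OF ConjNegL(1) this] show ?case by (simp add: sub_seq_def)
next
  case (ConjNegR R U B \<Gamma> A)
  have "mrl (add_mset (R, sub_f \<sigma> B) (sub_seq \<sigma> \<Gamma>))"
    using ConjNegR.IH[of \<sigma>] by (simp add: sub_seq_def)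
  from mrl.ConjNegR[OF ConjNegR(1) this] show ?case by (simp add: sub_seq_def)
next
  case (ConjPos R U A \<Gamma> B)
  have "mrl (add_mset (R, sub_f \<sigma> A) (sub_seq \<sigma> \<Gamma>))"
    using ConjPos.IH(1)[of \<sigma>] by (simp add: sub_seq_def)
  moreover have "mrl (add_mset (R, sub_f \<sigma> B) (sub_seq \<sigma> \<Gamma>))"
    using ConjPos.IH(2)[of \<sigma>] by (simp add: sub_seq_def)
  ultimately have "mrl (add_mset (R, Conj U (sub_f \<sigma> A) (sub_f \<sigma> B)) (sub_seq \<sigma> \<Gamma>))"
    by (rule mrl.ConjPos[OF ConjPos(1)])
  then show ?case by (simp add: sub_seq_def)
next
  case (ImpNeg R U \<Gamma> f A B)
  have "mrl (sub_seq \<sigma> \<Gamma> + {#(f -` R, sub_f \<sigma> A), (R, sub_f \<sigma> B)#})"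
    using ImpNeg.IH[of \<sigma>] by (simp add: sub_seq_def)
  from mrl.ImpNeg[OF ImpNeg(1) this] show ?case by (simp add: sub_seq_def)
next
  case (ImpPos R U f A \<Gamma>1 B \<Gamma>2)
  have "mrl (add_mset (f -` R, sub_f \<sigma> A) (sub_seq \<sigma> \<Gamma>1))"
    using ImpPos.IH(1)[of \<sigma>] by (simp add: sub_seq_def)
  moreover have "mrl (add_mset (R, sub_f \<sigma> B) (sub_seq \<sigma> \<Gamma>2))"
    using ImpPos.IH(2)[of \<sigma>] by (simp add: sub_seq_def)
  ultimately have "mrl (add_mset (R, Imp f U (sub_f \<sigma> A) (sub_f \<sigma> B)) (sub_seq \<sigma> \<Gamma>1 + sub_seq \<sigma> \<Gamma>2))"
    by (rule mrl.ImpPos[OF ImpPos(1)])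
  then show ?case by (simp add: sub_seq_def)
next
  case (AllNeg R U t A \<Gamma>)
  have "mrl (add_mset (R, subst_form 0 (sub_t \<sigma> t) (sub_f (up \<sigma>) A)) (sub_seq \<sigma> \<Gamma>))"
    using AllNeg.IH[of \<sigma>] by (simp add: sub_seq_def E2)
  from mrl.AllNeg[OF AllNeg(1) this] show ?case by (simp add: sub_seq_def)
next
  case (AllPos R U A \<Gamma>)
  have "mrl (add_mset (R, sub_f (up \<sigma>) A) (lift_seq (sub_seq \<sigma> \<Gamma>)))"
    using AllPos.IH[of "up \<sigma>"] sub_lift[of \<sigma> \<Gamma>] by (simp add: sub_seq_def)
  from mrl.AllPos[OF AllPos(1) this] show ?case by (simp add: sub_seq_def)
qed

lemma mrl_unlift: "mrl (lift_seq \<Gamma>) \<Longrightarrow> mrl \<Gamma>"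
  using mrl_sub[of "lift_seq \<Gamma>" "sk 0 (Var 0)"] by (simp add: sub_unlift)


definition filt :: "('r, 'f, 'p) sequent \<Rightarrow> ('r, 'f, 'p) sequent" where
  "filt \<Delta> = filter_mset (\<lambda>x. fst x \<noteq> {}) \<Delta>"

lemma filt_lift: "filt (lift_seq \<Gamma>) = lift_seq (filt \<Gamma>)"
  unfolding filt_def lift_seq_def
  by (induction \<Gamma>) (auto split: prod.splits)

lemma mrl_weak_add: "mrl \<Gamma> \<Longrightarrow> mrl (add_mset x \<Gamma>)"
  using mrl_weak[of \<Gamma> "{#x#}"] by simp

lemma swd: "sorted_wrt (\<lambda>A B. A \<inter> B = ({}::'a set)) Rs \<Longrightarrow> \<forall>i j. i < length Rs \<and> j < length Rs \<and> i \<noteq> j \<longrightarrow> Rs ! i \<inter> Rs ! j = {}"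
proof (intro allI impI)
  fix i j assume sw: "sorted_wrt (\<lambda>A B. A \<inter> B = ({}::'a set)) Rs" and h: "i < length Rs \<and> j < length Rs \<and> i \<noteq> j"
  show "Rs ! i \<inter> Rs ! j = {}"
  proof (cases "i < j")
    case True
    then show ?thesis using sorted_wrt_nth_less[OF sw True] h by simp
  next
    case False
    then have ji: "j < i" using h by simp
    show ?thesis using sorted_wrt_nth_less[OF sw ji] h by (simp add: Int_commute)
  qed
qed

lemma mrl_filt: "mrl \<Delta> \<Longrightarrow> mrl (filt \<Delta>)"
proof (induction rule: mrl.induct)
  case (Id Rs \<Gamma> p ts)
  let ?Rs = "filter (\<lambda>R. R \<noteq> {}) Rs"
  have u: "\<Union> (set ?Rs) = UNIV" using Id(3) by auto
  then have ne: "?Rs \<noteq> []" by (metis Union_empty empty_set empty_not_UNIV)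
  have sw: "sorted_wrt (\<lambda>A B. A \<inter> B = {}) Rs"
    using Id(2) by (auto simp: sorted_wrt_iff_nth_less)
  then have "sorted_wrt (\<lambda>A B. A \<inter> B = {}) ?Rs"
    by (rule sorted_wrt_filter)
  then have d: "\<forall>i j. i < length ?Rs \<and> j < length ?Rs \<and> i \<noteq> j \<longrightarrow> ?Rs ! i \<inter> ?Rs ! j = {}"
    by (rule swd)
  have "mrl (filt \<Gamma> + mset (map (\<lambda>R. (R, Atom p ts)) ?Rs))"
    using mrl.Id[OF ne d u] .
  moreover have "filt (\<Gamma> + mset (map (\<lambda>R. (R, Atom p ts)) Rs)) = filt \<Gamma> + mset (map (\<lambda>R. (R, Atom p ts)) ?Rs)"
    unfolding filt_def by (induction Rs) auto
  ultimately show ?case by simp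
next
  case (Weaken \<Gamma> R A)
  show ?case
  proof (cases "R = {}")
    case True
    then show ?thesis using Weaken.IH by (simp add: filt_def)
  next
    case False
    have "mrl (filt \<Gamma> + {#(R, A), (R, A)#})" using Weaken.IH False by (simp add: filt_def)
    from mrl.Weaken[OF this] show ?thesis using False by (simp add: filt_def)
  qed
next
  case (NegR f R A \<Gamma>)
  show ?case
  proof (cases "R = {}")
    case True
    then show ?thesis using NegR.IH by (simp add: filt_def)
  next
    case False
    have "mrl (add_mset (f -` R, A) (filt \<Gamma>))"
    proof (cases "f -` R = {}")
      case True
      then have "mrl (filt \<Gamma>)" using NegR.IH by (simp add: filt_def)
      then show ?thesis by (rule mrl_weak_add)
    next
      case False
      then show ?thesis using NegR.IH by (simp add: filt_def)
    qed
    from mrl.NegR[OF this] show ?thesis using False by (simp add: filt_def)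
  qed
next
  case (ConjNegL R U A \<Gamma> B)
  show ?case
  proof (cases "R = {}")
    case True
    then show ?thesis using ConjNegL.IH by (simp add: filt_def)
  next
    case False
    have "mrl (add_mset (R, A) (filt \<Gamma>))" using ConjNegL.IH False by (simp add: filt_def)
    from mrl.ConjNegL[OF ConjNegL(1) this] show ?thesis using False by (simp add: filt_def)
  qed
next
  case (ConjNegR R U B \<Gamma> A)
  show ?case
  proof (cases "R = {}")
    case True
    then show ?thesis using ConjNegR.IH by (simp add: filt_def)
  next
    case False
    have "mrl (add_mset (R, B) (filt \<Gamma>))" using ConjNegR.IH False by (simp add: filt_def)
    from mrl.ConjNegR[OF ConjNegR(1) this] show ?thesis using False by (simp add: filt_def)
  qed
next
  case (ConjPos R U A \<Gamma> B)
  show ?case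
  proof (cases "R = {}")
    case True
    then show ?thesis using ConjPos.IH by (simp add: filt_def)
  next
    case False
    have "mrl (add_mset (R, A) (filt \<Gamma>))" using ConjPos.IH False by (simp add: filt_def)
    moreover have "mrl (add_mset (R, B) (filt \<Gamma>))" using ConjPos.IH False by (simp add: filt_def)
    ultimately have "mrl (add_mset (R, Conj U A B) (filt \<Gamma>))" by (rule mrl.ConjPos[OF ConjPos(1)])
    then show ?thesis using False by (simp add: filt_def)
  qed
next
  case (ImpNeg R U \<Gamma> f A B)
  show ?case
  proof (cases "R = {}")
    case True
    then show ?thesis using ImpNeg.IH by (simp add: filt_def)
  next
    case False
    have "mrl (filt \<Gamma> + {#(f -` R, A), (R, B)#})"
    proof (cases "f -` R = {}")
      case True
      then have "mrl (add_mset (R, B) (filt \<Gamma>))" using ImpNeg.IH False by (simp add: filt_def)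
      then have "mrl (add_mset (f -` R, A) (add_mset (R, B) (filt \<Gamma>)))" by (rule mrl_weak_add)
      then show ?thesis by (simp add: ac_simps)
    next
      case F2: False
      then show ?thesis using ImpNeg.IH False by (simp add: filt_def)
    qed
    from mrl.ImpNeg[OF ImpNeg(1) this] show ?thesis using False by (simp add: filt_def)
  qed
next
  case (ImpPos R U f A \<Gamma>1 B \<Gamma>2)
  show ?case
  proof (cases "R = {}")
    case True
    have "mrl (filt \<Gamma>1)" "mrl (filt \<Gamma>2)" using ImpPos.IH True by (simp_all add: filt_def)
    from mrl_weak[OF this(1), of "filt \<Gamma>2"] show ?thesis using True by (simp add: filt_def)
  next
    case False
    show ?thesis
    proof (cases "f -` R = {}")
      case True
      have "mrl (filt \<Gamma>1)" using ImpPos.IH(1) True by (simp add: filt_def)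
      then have "mrl (filt \<Gamma>1 + add_mset (R, Imp f U A B) (filt \<Gamma>2))" by (rule mrl_weak)
      then show ?thesis using False by (simp add: filt_def)
    next
      case F2: False
      have "mrl (add_mset (R, Imp f U A B) (filt \<Gamma>1 + filt \<Gamma>2))"
        using mrl.ImpPos[OF ImpPos(1)] ImpPos.IH False F2 by (simp add: filt_def)
      then show ?thesis using False by (simp add: filt_def)
    qed
  qed
next
  case (AllNeg R U t A \<Gamma>)
  show ?case
  proof (cases "R = {}")
    case True
    then show ?thesis using AllNeg.IH by (simp add: filt_def)
  next
    case False
    have "mrl (add_mset (R, subst_form 0 t A) (filt \<Gamma>))" using AllNeg.IH False by (simp add: filt_def)
    from mrl.AllNeg[OF AllNeg(1) this] show ?thesis using False by (simp add: filt_def)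
  qed
next
  case (AllPos R U A \<Gamma>)
  show ?case
  proof (cases "R = {}")
    case True
    then have "mrl (filt (lift_seq \<Gamma>))" using AllPos.IH by (simp add: filt_def)
    then have "mrl (filt \<Gamma>)" by (simp add: filt_lift mrl_unlift)
    then show ?thesis using True by (simp add: filt_def)
  next
    case False
    have "mrl (add_mset (R, A) (lift_seq (filt \<Gamma>)))"
      using AllPos.IH False filt_lift[of \<Gamma>] by (simp add: filt_def)
    then show ?thesis using mrl.AllPos[OF AllPos(1)] False by (simp add: filt_def)
  qed
qed

theorem mainTheorem3:
  fixes \<Gamma> :: "('r, 'f, 'p) sequent" and A :: "('r, 'f, 'p) form"
  assumes "mrl (add_mset ({}, A) \<Gamma>)"
  shows "mrl \<Gamma>"
proof -
  have "mrl (filt \<Gamma>)" using mrl_filt[OF assms] by (simp add: filt_def)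
  then have "mrl (filt \<Gamma> + filter_mset (\<lambda>x. \<not> fst x \<noteq> {}) \<Gamma>)" by (rule mrl_weak)
  then show ?thesis unfolding filt_def by (simp add: multiset_partition[symmetric])
qed

end
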